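(* Let $\mathcal{C}=\{C_1,\ldots,C_r\}$ be a partition of $C$. Suppose that the sub-vectors $\mathbf{T}^{C_1},\ldots,\mathbf{T}^{C_r}$ are mutually independent, where $\mathbf{T}^{C_j}=(T_i)_{i\in C_j}$, and that each $\mathbf{T}^{C_j}$ is exchangeable. Then $q$ is $\mathcal{C}$-decomposable.
   Context: Consider components $C=[n]$ with random lifetimes $T_1,\ldots,T_n$ whose joint distribution has no ties. The relative quality function is $q(A)=\Pr(\max_{i\notin A}T_i<\min_{i\in A}T_i)$, with $q(\varnothing)=q([n])=1$. For a partition $\mathcal{C}=\{C_1,\ldots,C_r\}$ of $C$ into nonempty blocks, write $n_j=|C_j|$, $A_j=A\cap C_j$, and $q^{C_j}(A)=\Pr(\max_{i\in C_j\setminus A}T_i<\min_{i\in A}T_i)$ for $A\subseteq C_j$. A function $c\colon 2^C\to\mathbb{R}$ is $\mathcal{C}$-symmetric if $c(A)$ depends only on $(|A_1|,\ldots,|A_r|)$. The function $q$ is $\mathcal{C}$-decomposable if $q(A)=c(A)\prod_{j=1}^r q^{C_j}(A_j)$ for all $A\subseteq C$, for some $\mathcal{C}$-symmetric $c$. *)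

theory Defs
  imports "HOL-Probability.Probability" "HOL-Combinatorics.Permutations" "HOL-Library.Disjoint_Sets"
begin

text \<open>For A = {} or A = D the event is the whole
  space, so the value is 1.\<close>
definition rel_quality :: "'w measure \<Rightarrow> (nat \<Rightarrow> 'w \<Rightarrow> real) \<Rightarrow> nat set \<Rightarrow> nat set \<Rightarrow> real" where
  "rel_quality M T D A =
     measure M {\<omega> \<in> space M. \<forall>i\<in>D - A. \<forall>j\<in>A. T i \<omega> < T j \<omega>}"

definition partition_symmetric :: "nat set \<Rightarrow> nat set set \<Rightarrow> (nat set \<Rightarrow> real) \<Rightarrow> bool" where
  "partition_symmetric C P c \<longleftrightarrow>
     (\<forall>A B. A \<subseteq> C \<longrightarrow> B \<subseteq> C \<longrightarrow> (\<forall>D\<in>P. card (A \<inter> D) = card (B \<inter> D)) \<longrightarrow> c A = c B)"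

definition partition_decomposable :: "'w measure \<Rightarrow> (nat \<Rightarrow> 'w \<Rightarrow> real) \<Rightarrow> nat set \<Rightarrow> nat set set \<Rightarrow> bool" where
  "partition_decomposable M T C P \<longleftrightarrow>
     (\<exists>c. partition_symmetric C P c \<and>
        (\<forall>A. A \<subseteq> C \<longrightarrow> rel_quality M T C A = c A * (\<Prod>D\<in>P. rel_quality M T D (A \<inter> D))))"

definition exchangeable_block :: "'w measure \<Rightarrow> (nat \<Rightarrow> 'w \<Rightarrow> real) \<Rightarrow> nat set \<Rightarrow> bool" where
  "exchangeable_block M T D \<longleftrightarrow>
     (\<forall>\<sigma>. \<sigma> permutes D \<longrightarrow>
        distr M (PiM D (\<lambda>_. borel)) (\<lambda>\<omega>. \<lambda>i\<in>D. T (\<sigma> i) \<omega>)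
      = distr M (PiM D (\<lambda>_. borel)) (\<lambda>\<omega>. \<lambda>i\<in>D. T i \<omega>))"

end

theory Submission
  imports Defs
begin


lemma pred_lt_Pi:
  assumes "finite I" "finite J" "I \<subseteq> C" "J \<subseteq> C"
  shows "Measurable.pred (PiM C (\<lambda>_. borel)) (\<lambda>h::nat\<Rightarrow>real. \<forall>i\<in>I. \<forall>j\<in>J. h i < h j)"
proof (intro pred_intros_finite assms)
  fix i j assume "i \<in> I" "j \<in> J"
  then have "i \<in> C" "j \<in> C" using assms by auto
  then show "Measurable.pred (PiM C (\<lambda>_. borel)) (\<lambda>h::nat\<Rightarrow>real. h i < h j)"
    by measurable
qed

lemma pred_lt_M:
  assumes "finite I" "finite J" "\<And>i. i \<in> I \<union> J \<Longrightarrow> T i \<in> borel_measurable M"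
  shows "{\<omega> \<in> space M. \<forall>i\<in>I. \<forall>j\<in>J. T i \<omega> < (T j \<omega>::real)} \<in> sets M"
proof -
  have "Measurable.pred M (\<lambda>\<omega>. \<forall>i\<in>I. \<forall>j\<in>J. T i \<omega> < (T j \<omega>::real))"
  proof (intro pred_intros_finite assms)
    fix i j assume "i \<in> I" "j \<in> J"
    then have [measurable]: "T i \<in> borel_measurable M" "T j \<in> borel_measurable M" using assms by auto
    show "Measurable.pred M (\<lambda>\<omega>. T i \<omega> < T j \<omega>)" by measurable
  qed
  then show ?thesis by (simp add: pred_def)
qed


lemma (in prob_space) block_indep:
  fixes T :: "nat \<Rightarrow> 'a \<Rightarrow> real"
  assumes part: "partition_on C P"
    and indep: "indep_vars (\<lambda>D. PiM D (\<lambda>_. borel)) (\<lambda>D \<omega>. \<lambda>i\<in>D. T i \<omega>) P"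
    and D: "D \<in> P"
  shows "indep_var (PiM D (\<lambda>_. borel)) (\<lambda>\<omega>. \<lambda>i\<in>D. T i \<omega>)
                   (PiM (C - D) (\<lambda>_. borel)) (\<lambda>\<omega>. \<lambda>i\<in>C - D. T i \<omega>)"
proof -
  let ?M' = "\<lambda>D. PiM D (\<lambda>_. borel) :: (nat \<Rightarrow> real) measure"
  let ?X = "\<lambda>D \<omega>. \<lambda>i\<in>D. T i \<omega>"
  have ind: "indep_var (PiM {D} ?M') (\<lambda>\<omega>. restrict (\<lambda>D. ?X D \<omega>) {D})
      (PiM (P - {D}) ?M') (\<lambda>\<omega>. restrict (\<lambda>D. ?X D \<omega>) (P - {D}))"
    by (rule indep_var_restrict[OF indep]) (use D in auto)
  define blk where "blk i = (SOME D'. D' \<in> P \<and> i \<in> D')" for i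
  have blk: "blk i \<in> P - {D} \<and> i \<in> blk i" if "i \<in> C - D" for i
  proof -
    have "\<exists>D'. D' \<in> P \<and> i \<in> D'" using part that unfolding partition_on_def by auto
    then have "blk i \<in> P \<and> i \<in> blk i" unfolding blk_def by (rule someI_ex)
    then show ?thesis using that by auto
  qed
  define g1 where "g1 = (\<lambda>f::nat set \<Rightarrow> nat \<Rightarrow> real. f D)"
  define g2 where "g2 = (\<lambda>f::nat set \<Rightarrow> nat \<Rightarrow> real. \<lambda>i\<in>C - D. f (blk i) i)"
  have m1: "g1 \<in> measurable (PiM {D} ?M') (?M' D)"
    unfolding g1_def by (rule measurable_component_singleton) simp
  have m2: "g2 \<in> measurable (PiM (P - {D}) ?M') (PiM (C - D) (\<lambda>_. borel))"
    unfolding g2_def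
  proof (rule measurable_restrict)
    fix i assume i: "i \<in> C - D"
    have "(\<lambda>f. f (blk i)) \<in> measurable (PiM (P - {D}) ?M') (?M' (blk i))"
      by (rule measurable_component_singleton) (use blk[OF i] in auto)
    moreover have "(\<lambda>g. g i) \<in> measurable (?M' (blk i)) borel"
      by (rule measurable_component_singleton) (use blk[OF i] in auto)
    ultimately show "(\<lambda>f. f (blk i) i) \<in> borel_measurable (PiM (P - {D}) ?M')"
      by (rule measurable_compose)
  qed
  have "indep_var (?M' D) (g1 \<circ> (\<lambda>\<omega>. restrict (\<lambda>D. ?X D \<omega>) {D}))
        (PiM (C - D) (\<lambda>_. borel)) (g2 \<circ> (\<lambda>\<omega>. restrict (\<lambda>D. ?X D \<omega>) (P - {D})))"
    by (rule indep_var_compose[OF ind m1 m2])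
  moreover have "g1 \<circ> (\<lambda>\<omega>. restrict (\<lambda>D. ?X D \<omega>) {D}) = ?X D"
    by (auto simp: g1_def fun_eq_iff)
  moreover have "g2 \<circ> (\<lambda>\<omega>. restrict (\<lambda>D. ?X D \<omega>) (P - {D})) = ?X (C - D)"
  proof (rule ext)
    fix \<omega> show "(g2 \<circ> (\<lambda>\<omega>. restrict (\<lambda>D. ?X D \<omega>) (P - {D}))) \<omega> = ?X (C - D) \<omega>"
      unfolding g2_def comp_def
    proof (rule restrict_ext)
      fix i assume "i \<in> C - D"
      with blk[OF this] show "restrict (\<lambda>D. ?X D \<omega>) (P - {D}) (blk i) i = T i \<omega>" by simp
    qed
  qed
  ultimately show ?thesis by simp
qed



lemma (in prob_space) swap_block_prob:
  fixes T :: "nat \<Rightarrow> 'a \<Rightarrow> real"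
  assumes part: "partition_on C P"
    and indep: "indep_vars (\<lambda>D. PiM D (\<lambda>_. borel)) (\<lambda>D \<omega>. \<lambda>i\<in>D. T i \<omega>) P"
    and D: "D \<in> P"
    and exch: "exchangeable_block M T D"
    and sig: "\<sigma> permutes D"
    and Fp: "Measurable.pred (PiM C (\<lambda>_. borel)) F"
  shows "prob {\<omega> \<in> space M. F (\<lambda>i\<in>C. T (\<sigma> i) \<omega>)} = prob {\<omega> \<in> space M. F (\<lambda>i\<in>C. T i \<omega>)}"
proof -
  define SD where "SD = (PiM D (\<lambda>_. borel) :: (nat \<Rightarrow> real) measure)"
  define SY where "SY = (PiM (C - D) (\<lambda>_. borel) :: (nat \<Rightarrow> real) measure)"
  define X where "X = (\<lambda>\<omega>. \<lambda>i\<in>D. T i \<omega>)"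
  define X' where "X' = (\<lambda>\<omega>. \<lambda>i\<in>D. T (\<sigma> i) \<omega>)"
  define Y where "Y = (\<lambda>\<omega>. \<lambda>i\<in>C - D. T i \<omega>)"
  have iv: "indep_var SD X SY Y"
    unfolding SD_def SY_def X_def Y_def by (rule block_indep[OF part indep D])
  define h where "h = (\<lambda>f::nat \<Rightarrow> real. \<lambda>i\<in>D. f (\<sigma> i))"
  have hm: "h \<in> measurable SD SD"
    unfolding h_def SD_def
  proof (rule measurable_restrict)
    fix i assume "i \<in> D"
    then have "\<sigma> i \<in> D" using sig by (simp add: permutes_in_image)
    then show "(\<lambda>f. f (\<sigma> i)) \<in> borel_measurable (PiM D (\<lambda>_. borel))"
      by (rule measurable_component_singleton)
  qed
  have "indep_var SD (h \<circ> X) SY (id \<circ> Y)"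
    by (rule indep_var_compose[OF iv hm measurable_ident])
  moreover have "h \<circ> X = X'"
    by (rule ext) (auto simp: h_def X_def X'_def sig permutes_in_image restrict_def)
  ultimately have iv': "indep_var SD X' SY Y" by simp
  have dX: "distr M SD X' = distr M SD X"
    using exch sig unfolding exchangeable_block_def SD_def X_def X'_def by blast
  have J: "distr M (SD \<Otimes>\<^sub>M SY) (\<lambda>\<omega>. (X' \<omega>, Y \<omega>)) = distr M (SD \<Otimes>\<^sub>M SY) (\<lambda>\<omega>. (X \<omega>, Y \<omega>))"
    using iv iv' dX unfolding indep_var_distribution_eq by metis
  have rvX: "random_variable SD X" and rvX': "random_variable SD X'" and rvY: "random_variable SY Y"
    using iv iv' by (auto dest: indep_var_rv1 indep_var_rv2)
  define R where "R = (\<lambda>p::(nat \<Rightarrow> real) \<times> (nat \<Rightarrow> real). \<lambda>i\<in>C. if i \<in> D then fst p i else snd p i)"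
  have Rm: "R \<in> measurable (SD \<Otimes>\<^sub>M SY) (PiM C (\<lambda>_. borel))"
    unfolding R_def
  proof (rule measurable_restrict)
    fix i assume i: "i \<in> C"
    show "(\<lambda>p. if i \<in> D then fst p i else snd p i) \<in> borel_measurable (SD \<Otimes>\<^sub>M SY)"
    proof (cases "i \<in> D")
      case True
      have "(\<lambda>f. f i) \<in> borel_measurable SD" unfolding SD_def
        by (rule measurable_component_singleton) (fact True)
      then have "(\<lambda>p. fst p i) \<in> borel_measurable (SD \<Otimes>\<^sub>M SY)"
        by (rule measurable_compose[OF measurable_fst])
      then show ?thesis using True by simp
    next
      case False
      have "(\<lambda>f. f i) \<in> borel_measurable SY" unfolding SY_def
        by (rule measurable_component_singleton) (use False i in simp)
      then have "(\<lambda>p. snd p i) \<in> borel_measurable (SD \<Otimes>\<^sub>M SY)"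
        by (rule measurable_compose[OF measurable_snd])
      then show ?thesis using False by simp
    qed
  qed
  define S where "S = {p \<in> space (SD \<Otimes>\<^sub>M SY). F (R p)}"
  have Sset: "S \<in> sets (SD \<Otimes>\<^sub>M SY)"
    using measurable_compose[OF Rm Fp] unfolding S_def pred_def by simp
  have pm: "(\<lambda>\<omega>. (X \<omega>, Y \<omega>)) \<in> measurable M (SD \<Otimes>\<^sub>M SY)"
    using rvX rvY by (rule measurable_Pair)
  have pm': "(\<lambda>\<omega>. (X' \<omega>, Y \<omega>)) \<in> measurable M (SD \<Otimes>\<^sub>M SY)"
    using rvX' rvY by (rule measurable_Pair)
  have e1: "{\<omega> \<in> space M. F (\<lambda>i\<in>C. T i \<omega>)} = (\<lambda>\<omega>. (X \<omega>, Y \<omega>)) -` S \<inter> space M"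
  proof -
    have "R (X \<omega>, Y \<omega>) = (\<lambda>i\<in>C. T i \<omega>)" for \<omega>
      by (auto simp: R_def X_def Y_def restrict_def fun_eq_iff)
    moreover have "(X \<omega>, Y \<omega>) \<in> space (SD \<Otimes>\<^sub>M SY)" if "\<omega> \<in> space M" for \<omega>
      using measurable_space[OF pm that] .
    ultimately show ?thesis unfolding S_def by auto
  qed
  have e2: "{\<omega> \<in> space M. F (\<lambda>i\<in>C. T (\<sigma> i) \<omega>)} = (\<lambda>\<omega>. (X' \<omega>, Y \<omega>)) -` S \<inter> space M"
  proof -
    have "R (X' \<omega>, Y \<omega>) = (\<lambda>i\<in>C. T (\<sigma> i) \<omega>)" for \<omega>
      using sig by (auto simp: R_def X'_def Y_def restrict_def fun_eq_iff permutes_not_in)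
    moreover have "(X' \<omega>, Y \<omega>) \<in> space (SD \<Otimes>\<^sub>M SY)" if "\<omega> \<in> space M" for \<omega>
      using measurable_space[OF pm' that] .
    ultimately show ?thesis unfolding S_def by auto
  qed
  show ?thesis
    unfolding e1 e2 using measure_distr[OF pm' Sset] measure_distr[OF pm Sset] J by simp
qed



lemma (in prob_space) rq_perm:
  fixes T :: "nat \<Rightarrow> 'a \<Rightarrow> real"
  assumes part: "partition_on C P" and finC: "finite C"
    and indep: "indep_vars (\<lambda>D. PiM D (\<lambda>_. borel)) (\<lambda>D \<omega>. \<lambda>i\<in>D. T i \<omega>) P"
    and D: "D \<in> P"
    and exch: "exchangeable_block M T D"
    and sig: "\<sigma> permutes D"
    and D': "D' \<subseteq> C" "\<sigma> ` D' = D'" and B: "B \<subseteq> D'"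
  shows "rel_quality M T D' (\<sigma> ` B) = rel_quality M T D' B"
proof -
  define F where "F = (\<lambda>h::nat \<Rightarrow> real. \<forall>i\<in>D' - B. \<forall>j\<in>B. h i < h j)"
  have finB: "finite B" "finite (D' - B)" using finC D' B
    by (meson finite_subset subset_trans Diff_subset)+
  have DC: "\<And>i. i \<in> D' \<Longrightarrow> i \<in> C" "\<And>i. i \<in> B \<Longrightarrow> i \<in> C" using D' B by auto
  have Fp: "Measurable.pred (PiM C (\<lambda>_. borel)) F"
    unfolding F_def by (rule pred_lt_Pi) (use D' B finB in auto)
  have "inj \<sigma>" using sig by (rule permutes_inj)
  then have dif: "D' - \<sigma> ` B = \<sigma> ` (D' - B)" using D'(2) by (simp add: image_set_diff)
  have "rel_quality M T D' B = prob {\<omega> \<in> space M. F (\<lambda>i\<in>C. T i \<omega>)}"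
  proof -
    have "(\<forall>i\<in>D' - B. \<forall>j\<in>B. T i \<omega> < T j \<omega>) = F (\<lambda>i\<in>C. T i \<omega>)" for \<omega>
      unfolding F_def using DC by auto
    then show ?thesis unfolding rel_quality_def by simp
  qed
  moreover have "rel_quality M T D' (\<sigma> ` B) = prob {\<omega> \<in> space M. F (\<lambda>i\<in>C. T (\<sigma> i) \<omega>)}"
  proof -
    have "(\<forall>i\<in>D' - \<sigma> ` B. \<forall>j\<in>\<sigma> ` B. T i \<omega> < T j \<omega>) = F (\<lambda>i\<in>C. T (\<sigma> i) \<omega>)" for \<omega>
      unfolding dif F_def using DC by auto
    then show ?thesis unfolding rel_quality_def by simp
  qed
  ultimately show ?thesis
    using swap_block_prob[OF part indep D exch sig Fp] by simp
qed



lemma transpose_block_image: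
  assumes part: "partition_on C P" and D: "D \<in> P" "a \<in> D" "b \<in> D" and D': "D' \<in> P"
  shows "Transposition.transpose a b ` D' = D'"
proof (cases "D' = D")
  case True then show ?thesis using permutes_image[OF permutes_swap_id[OF D(2,3)]] by simp
next
  case False
  then have "D \<inter> D' = {}" using part D D' unfolding partition_on_def by (metis disjointD)
  then have "a \<notin> D'" "b \<notin> D'" using D by auto
  then show ?thesis
    by (auto simp: image_iff)
qed

lemma sym_by_swaps:
  fixes Q :: "nat set \<Rightarrow> real"
  assumes finC: "finite C" and part: "partition_on C P"
    and swap: "\<And>D a b A. D \<in> P \<Longrightarrow> a \<in> D \<Longrightarrow> b \<in> D \<Longrightarrow> A \<subseteq> C \<Longrightarrow> Q (Transposition.transpose a b ` A) = Q A"
  shows "A \<subseteq> C \<Longrightarrow> B \<subseteq> C \<Longrightarrow> \<forall>D\<in>P. card (A \<inter> D) = card (B \<inter> D) \<Longrightarrow> Q A = Q B"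
proof (induction "card (A - B)" arbitrary: A rule: less_induct)
  case (less A)
  show ?case
  proof (cases "A = B")
    case True then show ?thesis by simp
  next
    case False
    then obtain x where x: "x \<in> A - B \<or> x \<in> B - A" by blast
    then have "x \<in> C" using less by auto
    then obtain D where D: "D \<in> P" "x \<in> D" using part unfolding partition_on_def by auto
    have finD: "finite D" using D part finC unfolding partition_on_def
      by (meson Union_upper finite_subset)
    have neq: "A \<inter> D \<noteq> B \<inter> D" using x D by auto
    have cd: "card (A \<inter> D) = card (B \<inter> D)" using less D by auto
    have "\<not> A \<inter> D \<subseteq> B \<inter> D"
      using card_subset_eq[of "B \<inter> D" "A \<inter> D"] finD cd neq by auto
    then obtain a where a: "a \<in> A" "a \<notin> B" "a \<in> D" by auto
    have "\<not> B \<inter> D \<subseteq> A \<inter> D"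
      using card_subset_eq[of "A \<inter> D" "B \<inter> D"] finD cd neq by auto
    then obtain b where b: "b \<in> B" "b \<notin> A" "b \<in> D" by auto
    define A' where "A' = Transposition.transpose a b ` A"
    have A'eq: "A' = insert b (A - {a})"
      unfolding A'_def using a b by (auto simp: Transposition.transpose_def image_iff split: if_splits)
    have A'C: "A' \<subseteq> C" using A'eq less b by auto
    have finA: "finite (A - B)" using less finC by (meson finite_Diff finite_subset)
    have "A' - B = (A - B) - {a}" using A'eq b by auto
    then have lt: "card (A' - B) < card (A - B)"
      using finA a by (metis DiffI card_Diff1_less)
    have cnt: "\<forall>D'\<in>P. card (A' \<inter> D') = card (B \<inter> D')"
    proof
      fix D' assume D': "D' \<in> P"
      have "A' \<inter> D' = Transposition.transpose a b ` (A \<inter> D')"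
        unfolding A'_def using transpose_block_image[OF part D(1) a(3) b(3) D']
        by (metis image_Int inj_transpose)
      then have "card (A' \<inter> D') = card (A \<inter> D')"
        by (simp add: card_image inj_on_transpose)
      then show "card (A' \<inter> D') = card (B \<inter> D')" using less D' by simp
    qed
    have "Q A' = Q B" using less(1)[OF lt A'C less(3) cnt] .
    moreover have "Q A' = Q A" unfolding A'_def by (rule swap[OF D(1) a(3) b(3) less(2)])
    ultimately show ?thesis by simp
  qed
qed



theorem corollary10:
  fixes M :: "'w measure" and T :: "nat \<Rightarrow> 'w \<Rightarrow> real" and n :: nat and P :: "nat set set"
  assumes "prob_space M"
    and meas: "\<And>i. i \<in> {1..n} \<Longrightarrow> T i \<in> borel_measurable M"
    and no_ties: "AE \<omega> in M. inj_on (\<lambda>i. T i \<omega>) {1..n}"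
    and part: "partition_on {1..n} P"
    and indep: "prob_space.indep_vars M (\<lambda>D. PiM D (\<lambda>_. borel))
                  (\<lambda>D \<omega>. \<lambda>i\<in>D. T i \<omega>) P"
    and exch: "\<And>D. D \<in> P \<Longrightarrow> exchangeable_block M T D"
  shows "partition_decomposable M T {1..n} P"
proof -
  interpret prob_space M by fact
  define C where "C = {1..n::nat}"
  have finC: "finite C" unfolding C_def by simp
  have partC: "partition_on C P" using part unfolding C_def .
  have DC: "D \<subseteq> C" if "D \<in> P" for D using partC that unfolding partition_on_def by auto
  have finP: "finite P" using finC partC unfolding partition_on_def
    by (metis finite_UnionD)
  define q where "q A = rel_quality M T C A" for A
  define pr where "pr A = (\<Prod>D\<in>P. rel_quality M T D (A \<inter> D))" for A
  have key: "rel_quality M T D' (Transposition.transpose a b ` B) = rel_quality M T D' B"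
    if D: "D \<in> P" "a \<in> D" "b \<in> D" and D': "D' \<subseteq> C" "Transposition.transpose a b ` D' = D'"
      and B: "B \<subseteq> D'" for D a b D' B
    by (rule rq_perm[OF partC finC indep D(1) exch[OF D(1)] permutes_swap_id[OF D(2,3)] D' B])
  have imgC: "Transposition.transpose a b ` C = C" if "D \<in> P" "a \<in> D" "b \<in> D" for D a b
    using permutes_image[OF permutes_subset[OF permutes_swap_id[OF that(2,3)] DC[OF that(1)]]] .
  have symq: "q A = q B" if "A \<subseteq> C" "B \<subseteq> C" "\<forall>D\<in>P. card (A \<inter> D) = card (B \<inter> D)" for A B
  proof (rule sym_by_swaps[OF finC partC _ that])
    fix D a b A assume D: "D \<in> P" "a \<in> D" "b \<in> D" and A: "A \<subseteq> C"
    show "q (Transposition.transpose a b ` A) = q A"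
      unfolding q_def by (rule key[OF D order_refl imgC[OF D] A])
  qed
  have sympr: "pr A = pr B" if "A \<subseteq> C" "B \<subseteq> C" "\<forall>D\<in>P. card (A \<inter> D) = card (B \<inter> D)" for A B
  proof (rule sym_by_swaps[OF finC partC _ that])
    fix D a b A assume D: "D \<in> P" "a \<in> D" "b \<in> D" and "A \<subseteq> C"
    show "pr (Transposition.transpose a b ` A) = pr A"
      unfolding pr_def
    proof (rule prod.cong[OF refl])
      fix D' assume D': "D' \<in> P"
      have im: "Transposition.transpose a b ` D' = D'"
        by (rule transpose_block_image[OF partC D D'])
      have "Transposition.transpose a b ` A \<inter> D' = Transposition.transpose a b ` (A \<inter> D')"
        using im by (metis image_Int inj_transpose)
      then show "rel_quality M T D' (Transposition.transpose a b ` A \<inter> D') = rel_quality M T D' (A \<inter> D')"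
        using key[OF D DC[OF D'] im, of "A \<inter> D'"] by simp
    qed
  qed
  define c where "c A = (if pr A = 0 then 0 else q A / pr A)" for A
  have "partition_symmetric C P c"
    unfolding partition_symmetric_def
  proof (intro allI impI)
    fix A B assume AB: "A \<subseteq> C" "B \<subseteq> C" "\<forall>D\<in>P. card (A \<inter> D) = card (B \<inter> D)"
    have "q A = q B" "pr A = pr B" using symq[OF AB] sympr[OF AB] by simp_all
    then show "c A = c B" unfolding c_def by simp
  qed
  moreover have "rel_quality M T C A = c A * (\<Prod>D\<in>P. rel_quality M T D (A \<inter> D))" if A: "A \<subseteq> C" for A
  proof (cases "pr A = 0")
    case False then show ?thesis unfolding c_def q_def pr_def by simp
  next
    case True
    then obtain D where D: "D \<in> P" "rel_quality M T D (A \<inter> D) = 0"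
      unfolding pr_def using finP by (meson prod_zero_iff)
    have sub: "{\<omega> \<in> space M. \<forall>i\<in>C - A. \<forall>j\<in>A. T i \<omega> < T j \<omega>}
       \<subseteq> {\<omega> \<in> space M. \<forall>i\<in>D - A \<inter> D. \<forall>j\<in>A \<inter> D. T i \<omega> < T j \<omega>}"
      using DC[OF D(1)] by auto
    have fin: "finite (D - A \<inter> D)" "finite (A \<inter> D)"
      using DC[OF D(1)] finC by (meson finite_Diff finite_Int finite_subset)+
    have "{\<omega> \<in> space M. \<forall>i\<in>D - A \<inter> D. \<forall>j\<in>A \<inter> D. T i \<omega> < T j \<omega>} \<in> sets M"
      by (rule pred_lt_M[OF fin]) (use meas DC[OF D(1)] in \<open>auto simp: C_def\<close>)
    then have "rel_quality M T C A \<le> rel_quality M T D (A \<inter> D)"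
      unfolding rel_quality_def using sub by (rule finite_measure_mono[rotated])
    moreover have "0 \<le> rel_quality M T C A" unfolding rel_quality_def by (rule measure_nonneg)
    ultimately have "rel_quality M T C A = 0" using D(2) by linarith
    then show ?thesis using True unfolding c_def pr_def by simp
  qed
  ultimately have "partition_decomposable M T C P"
    unfolding partition_decomposable_def by blast
  then show ?thesis unfolding C_def .
qed


end
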